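(* Let $(q(\ell))_{\ell\in\mathbb{Z}}\subset\mathbb{C}$ and $(p(\ell,z))_{(\ell,z)\in\mathbb{Z}^2}\subset\mathbb{C}$ satisfy $q(\ell)=0$ for all $\ell<0$ and $p(\ell,z)=0$ for all $\ell\in\mathbb{Z}$, $z<0$. Let $r$, $\mathbb{L}$, $\ddot r$, $\ddot p_+$, $q|_{\mathbb{L}}$ and $\beta\{\ddot p_+\}$ be as in the context. Then $$q|_{\mathbb{L}}(\ell)=\sum_{z\in\mathbb{Z}}\ddot r(\ell-z)\,\beta\{\ddot p_+\}(\ell,z)\qquad(\ell\in\mathbb{Z}).$$ In particular, $q|_{\mathbb{L}}(\ell)=q(\ell)$ for all $\ell\in\mathbb{Z}$ whenever $q(\ell)=0$ for all $\ell\in\mathbb{Z}\setminus\mathbb{L}$.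
   Context: Define $r(\ell):=\sum_{z\in\mathbb{Z}}q(\ell-z)p(\ell,z)$ for $\ell\in\mathbb{Z}$ (a finite sum). Let $L_0:=\sup\{L\in\mathbb{N}_0: p(\ell,0)\neq0 \text{ for all } 0\le\ell<L\}\in\mathbb{N}_0\cup\{\infty\}$; it is assumed that $L_0\ge1$. Put $\mathbb{L}:=\{\ell\in\mathbb{Z}:0\le\ell<L_0\}$. Define $\ddot r(\ell):=\frac{r(\ell)}{p(\ell,0)}\mathbf 1_{\mathbb{L}}(\ell)$, $\ddot p_+(\ell,z):=\big(\delta_{z,0}-\frac{p(\ell,z)}{p(\ell,0)}\big)\mathbf 1_{\mathbb{L}}(\ell)$ (with $\delta_{z,0}=1$ if $z=0$ and $0$ otherwise; both quantities are $0$ for $\ell\notin\mathbb{L}$), and $q|_{\mathbb{L}}(\ell):=q(\ell)\mathbf 1_{\mathbb{L}}(\ell)$. Convolution powers of the double sequence $\ddot p_+$: $\ddot p_+^{*0}(\ell,z):=\delta_{z,0}$ and $\ddot p_+^{*j}(\ell,z):=\sum_{z_1\in\mathbb{Z}}\ddot p_+(\ell,z_1)\,\ddot p_+^{*(j-1)}(\ell-z_1,z-z_1)$ for $j\ge1$ (finite sums). Set $\beta\{\ddot p_+\}(\ell,z):=\sum_{j=0}^{\lfloor z\rfloor}\ddot p_+^{*j}(\ell,z)$ for $(\ell,z)\in\mathbb{Z}^2$ (empty sums are $0$, so this is $0$ for $z<0$). *)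

theory Defs
  imports Complex_Main "HOL-Library.Groups_Big_Fun" "HOL-Library.Extended_Nat"
begin

text \<open>Sums over \<int> are finitely supported sums (Sum_any: sum over the support,
  which is finite in all uses below).\<close>

definition r_seq :: "(int \<Rightarrow> complex) \<Rightarrow> (int \<Rightarrow> int \<Rightarrow> complex) \<Rightarrow> int \<Rightarrow> complex" where
  "r_seq q p l = Sum_any (\<lambda>z. q (l - z) * p l z)"

definition L0 :: "(int \<Rightarrow> int \<Rightarrow> complex) \<Rightarrow> enat" where
  "L0 p = Sup {enat L | L. \<forall>l. 0 \<le> l \<and> l < int L \<longrightarrow> p l 0 \<noteq> 0}"

definition LL :: "(int \<Rightarrow> int \<Rightarrow> complex) \<Rightarrow> int set" where
  "LL p = {l. 0 \<le> l \<and> enat (nat l) < L0 p}"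

definition rdd :: "(int \<Rightarrow> complex) \<Rightarrow> (int \<Rightarrow> int \<Rightarrow> complex) \<Rightarrow> int \<Rightarrow> complex" where
  "rdd q p l = (if l \<in> LL p then r_seq q p l / p l 0 else 0)"

definition pdd :: "(int \<Rightarrow> int \<Rightarrow> complex) \<Rightarrow> int \<Rightarrow> int \<Rightarrow> complex" where
  "pdd p l z = (if l \<in> LL p then (if z = 0 then 1 else 0) - p l z / p l 0 else 0)"

definition q_restr :: "(int \<Rightarrow> complex) \<Rightarrow> (int \<Rightarrow> int \<Rightarrow> complex) \<Rightarrow> int \<Rightarrow> complex" where
  "q_restr q p l = (if l \<in> LL p then q l else 0)"

primrec conv_pow :: "(int \<Rightarrow> int \<Rightarrow> complex) \<Rightarrow> nat \<Rightarrow> int \<Rightarrow> int \<Rightarrow> complex" where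
  "conv_pow a 0 l z = (if z = 0 then 1 else 0)"
| "conv_pow a (Suc j) l z = Sum_any (\<lambda>z1. a l z1 * conv_pow a j (l - z1) (z - z1))"

definition beta :: "(int \<Rightarrow> int \<Rightarrow> complex) \<Rightarrow> int \<Rightarrow> int \<Rightarrow> complex" where
  "beta a l z = (\<Sum>j\<in>{j::nat. int j \<le> z}. conv_pow a j l z)"

end

theory Submission
  imports Defs
begin

lemma LL_p0:
  assumes "l \<in> LL p" shows "p l 0 \<noteq> 0"
proof -
  have "enat (nat l) < L0 p" "0 \<le> l" using assms by (auto simp: LL_def)
  then obtain x where x: "x \<in> {enat L | L. \<forall>l. 0 \<le> l \<and> l < int L \<longrightarrow> p l 0 \<noteq> 0}"
     "enat (nat l) < x" unfolding L0_def by (auto simp: less_Sup_iff)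
  then obtain L where "x = enat L" "\<forall>l. 0 \<le> l \<and> l < int L \<longrightarrow> p l 0 \<noteq> 0" by auto
  with x(2) \<open>0 \<le> l\<close> show ?thesis by auto
qed

lemma LL_down:
  assumes "l \<in> LL p" "0 \<le> l'" "l' \<le> l" shows "l' \<in> LL p"
proof -
  have "enat (nat l') \<le> enat (nat l)" using assms by auto
  moreover have "enat (nat l) < L0 p" using assms by (auto simp: LL_def)
  ultimately have "enat (nat l') < L0 p" by (rule le_less_trans)
  then show ?thesis using assms by (auto simp: LL_def)
qed

lemma LL_nonneg: "l \<in> LL p \<Longrightarrow> 0 \<le> l" by (auto simp: LL_def)

lemma pdd_supp:
  assumes p_neg: "\<And>l z. z < 0 \<Longrightarrow> p l z = 0" and "pdd p l z \<noteq> 0"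
  shows "1 \<le> z \<and> l \<in> LL p"
proof -
  have l: "l \<in> LL p" using assms(2) by (auto simp: pdd_def split: if_splits)
  have "z \<noteq> 0" using assms(2) LL_p0[OF l] by (auto simp: pdd_def split: if_splits)
  moreover have "\<not> z < 0" using assms by (auto simp: pdd_def split: if_splits)
  ultimately show ?thesis using l by auto
qed

lemma Sum_any_nz:
  assumes "Sum_any g \<noteq> (0::complex)" shows "\<exists>x. g x \<noteq> 0"
proof (rule ccontr)
  assume "\<not> ?thesis" then have "g = (\<lambda>_. 0)" by auto
  then show False using assms by simp
qed

lemma conv_supp:
  assumes p_neg: "\<And>l z. z < 0 \<Longrightarrow> p l z = 0"
  shows "conv_pow (pdd p) j l z \<noteq> 0 \<Longrightarrow> int j \<le> z \<and> (j = 0 \<longrightarrow> z = 0)"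
proof (induction j arbitrary: l z)
  case 0 then show ?case by (auto split: if_splits)
next
  case (Suc j)
  then obtain z1 where "pdd p l z1 * conv_pow (pdd p) j (l - z1) (z - z1) \<noteq> 0"
    using Sum_any_nz by fastforce
  then have "pdd p l z1 \<noteq> 0" "conv_pow (pdd p) j (l - z1) (z - z1) \<noteq> 0" by auto
  with pdd_supp[OF p_neg] Suc.IH show ?case by fastforce
qed

lemma conv_Suc_fin:
  assumes p_neg: "\<And>l z. z < 0 \<Longrightarrow> p l z = 0" and "z \<le> l"
  shows "conv_pow (pdd p) (Suc j) l z = (\<Sum>z1\<in>{1..l}. pdd p l z1 * conv_pow (pdd p) j (l - z1) (z - z1))"
  unfolding conv_pow.simps
proof (rule Sum_any.expand_superset)
  show "{a. pdd p l a * conv_pow (pdd p) j (l - a) (z - a) \<noteq> 0} \<subseteq> {1..l}"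
  proof
    fix a assume "a \<in> {a. pdd p l a * conv_pow (pdd p) j (l - a) (z - a) \<noteq> 0}"
    then have "pdd p l a \<noteq> 0" "conv_pow (pdd p) j (l - a) (z - a) \<noteq> 0" by auto
    with pdd_supp[OF p_neg] conv_supp[OF p_neg] assms(2) show "a \<in> {1..l}" by fastforce
  qed
qed simp

lemma beta_fin:
  assumes p_neg: "\<And>l z. z < 0 \<Longrightarrow> p l z = 0" and "z \<le> int N"
  shows "beta (pdd p) l z = (\<Sum>j\<le>N. conv_pow (pdd p) j l z)"
  unfolding beta_def
proof (rule sum.mono_neutral_left)
  show "{j. int j \<le> z} \<subseteq> {..N}" using assms(2) by auto
  show "\<forall>i\<in>{..N} - {j. int j \<le> z}. conv_pow (pdd p) i l z = 0"
    using conv_supp[OF p_neg] by force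
qed auto

lemma beta_supp:
  "beta a l z \<noteq> 0 \<Longrightarrow> 0 \<le> z"
  unfolding beta_def by (rule ccontr) auto

definition ff where "ff q p l = Sum_any (\<lambda>z. rdd q p (l - z) * beta (pdd p) l z)"

lemma ff_fin:
  assumes "A \<supseteq> {0..l}" "finite A"
  shows "ff q p l = (\<Sum>z\<in>A. rdd q p (l - z) * beta (pdd p) l z)"
  unfolding ff_def
proof (rule Sum_any.expand_superset)
  show "{a. rdd q p (l - a) * beta (pdd p) l a \<noteq> 0} \<subseteq> A"
  proof
    fix a assume "a \<in> {a. rdd q p (l - a) * beta (pdd p) l a \<noteq> 0}"
    then have "rdd q p (l - a) \<noteq> 0" "beta (pdd p) l a \<noteq> 0" by auto
    then have "l - a \<in> LL p" "0 \<le> a" using beta_supp by (auto simp: rdd_def split: if_splits)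
    then show "a \<in> A" using LL_nonneg assms(1) by fastforce
  qed
qed (rule assms)


lemma ff_shift:
  assumes p_neg: "\<And>l z. z < 0 \<Longrightarrow> p l z = 0" and "1 \<le> z1" "z1 \<le> l"
  shows "ff q p (l - z1) = (\<Sum>z\<in>{0..l}. rdd q p (l - z) *
     (\<Sum>j\<le>nat l. conv_pow (pdd p) j (l - z1) (z - z1)))"
proof -
  have "ff q p (l - z1) = (\<Sum>z\<in>(\<lambda>z. z - z1) ` {0..l}. rdd q p (l - z1 - z) * beta (pdd p) (l - z1) z)"
  proof (rule ff_fin)
    show "{0..l - z1} \<subseteq> (\<lambda>z. z - z1) ` {0..l}"
    proof
      fix x assume "x \<in> {0..l - z1}"
      then have "x + z1 \<in> {0..l}" "x = (x + z1) - z1" using assms by auto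
      then show "x \<in> (\<lambda>z. z - z1) ` {0..l}" by blast
    qed
  qed auto
  also have "\<dots> = (\<Sum>z\<in>{0..l}. rdd q p (l - z1 - (z - z1)) * beta (pdd p) (l - z1) (z - z1))"
    by (subst sum.reindex) (auto simp: inj_on_def)
  also have "\<dots> = (\<Sum>z\<in>{0..l}. rdd q p (l - z) *
     (\<Sum>j\<le>nat l. conv_pow (pdd p) j (l - z1) (z - z1)))"
  proof (rule sum.cong)
    fix z assume "z \<in> {0..l}"
    then have "z - z1 \<le> int (nat l)" using assms by auto
    then show "rdd q p (l - z1 - (z - z1)) * beta (pdd p) (l - z1) (z - z1) = rdd q p (l - z) *
     (\<Sum>j\<le>nat l. conv_pow (pdd p) j (l - z1) (z - z1))"
      using beta_fin[OF p_neg] by simp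
  qed simp
  finally show ?thesis .
qed

lemma ff_rec:
  assumes p_neg: "\<And>l z. z < 0 \<Longrightarrow> p l z = 0" and l: "0 \<le> l"
  shows "ff q p l = rdd q p l + (\<Sum>z1\<in>{1..l}. pdd p l z1 * ff q p (l - z1))"
proof -
  define N where "N = nat l"
  define C where "C = conv_pow (pdd p)"
  have "ff q p l = (\<Sum>z\<in>{0..l}. rdd q p (l - z) * beta (pdd p) l z)"
    by (rule ff_fin) auto
  also have "\<dots> = (\<Sum>z\<in>{0..l}. rdd q p (l - z) * (\<Sum>j\<le>Suc N. C j l z))"
  proof (rule sum.cong)
    fix z assume "z \<in> {0..l}"
    then have zN: "z \<le> int (Suc N)" using l by (auto simp: N_def)
    show "rdd q p (l - z) * beta (pdd p) l z = rdd q p (l - z) * (\<Sum>j\<le>Suc N. C j l z)"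
      using beta_fin[OF p_neg zN] by (simp only: C_def)
  qed simp
  also have "\<dots> = (\<Sum>z\<in>{0..l}. rdd q p (l - z) * C 0 l z) +
      (\<Sum>z\<in>{0..l}. rdd q p (l - z) * (\<Sum>j\<le>N. C (Suc j) l z))"
    by (simp only: sum.atMost_Suc_shift distrib_left sum.distrib)
  also have "(\<Sum>z\<in>{0..l}. rdd q p (l - z) * C 0 l z) = rdd q p l"
  proof -
    have "(\<Sum>z\<in>{0..l}. rdd q p (l - z) * C 0 l z) = (\<Sum>z\<in>{0..l}. if z = 0 then rdd q p (l - z) else 0)"
      by (rule sum.cong) (auto simp: C_def)
    also have "\<dots> = rdd q p l" using l by (simp add: sum.delta)
    finally show ?thesis .
  qed
  also have "(\<Sum>z\<in>{0..l}. rdd q p (l - z) * (\<Sum>j\<le>N. C (Suc j) l z))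
     = (\<Sum>z\<in>{0..l}. \<Sum>j\<le>N. \<Sum>z1\<in>{1..l}. pdd p l z1 * (rdd q p (l - z) * C j (l - z1) (z - z1)))"
  proof (rule sum.cong)
    fix z assume "z \<in> {0..l}"
    then show "rdd q p (l - z) * (\<Sum>j\<le>N. C (Suc j) l z) =
       (\<Sum>j\<le>N. \<Sum>z1\<in>{1..l}. pdd p l z1 * (rdd q p (l - z) * C j (l - z1) (z - z1)))"
      using conv_Suc_fin[where p=p, OF p_neg]
      by (simp add: C_def sum_distrib_left mult.left_commute)
  qed simp
  also have "\<dots> = (\<Sum>z\<in>{0..l}. \<Sum>z1\<in>{1..l}. \<Sum>j\<le>N. pdd p l z1 * (rdd q p (l - z) * C j (l - z1) (z - z1)))"
    by (rule sum.cong[OF refl], rule sum.swap)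
  also have "\<dots> = (\<Sum>z1\<in>{1..l}. \<Sum>z\<in>{0..l}. \<Sum>j\<le>N. pdd p l z1 * (rdd q p (l - z) * C j (l - z1) (z - z1)))"
    by (rule sum.swap)
  also have "\<dots> = (\<Sum>z1\<in>{1..l}. pdd p l z1 * ff q p (l - z1))"
  proof (rule sum.cong)
    fix z1 assume "z1 \<in> {1..l}"
    then have "ff q p (l - z1) = (\<Sum>z\<in>{0..l}. rdd q p (l - z) *
     (\<Sum>j\<le>nat l. conv_pow (pdd p) j (l - z1) (z - z1)))"
      by (intro ff_shift p_neg) auto
    then show "(\<Sum>z\<in>{0..l}. \<Sum>j\<le>N. pdd p l z1 * (rdd q p (l - z) * C j (l - z1) (z - z1))) =
       pdd p l z1 * ff q p (l - z1)"
      by (simp add: C_def N_def sum_distrib_left)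
  qed simp
  finally show ?thesis .
qed


lemma q_rec:
  assumes q_neg: "\<And>l. l < 0 \<Longrightarrow> q l = 0"
    and p_neg: "\<And>l z. z < 0 \<Longrightarrow> p l z = 0" and l: "0 \<le> l"
  shows "q_restr q p l = rdd q p l + (\<Sum>z1\<in>{1..l}. pdd p l z1 * q_restr q p (l - z1))"
proof (cases "l \<in> LL p")
  case False
  then show ?thesis by (simp add: q_restr_def rdd_def pdd_def)
next
  case True
  have p0: "p l 0 \<noteq> 0" using LL_p0[OF True] .
  have "r_seq q p l = (\<Sum>z\<in>{0..l}. q (l - z) * p l z)"
    unfolding r_seq_def
  proof (rule Sum_any.expand_superset)
    show "{a. q (l - a) * p l a \<noteq> 0} \<subseteq> {0..l}"
    proof
      fix a assume "a \<in> {a. q (l - a) * p l a \<noteq> 0}"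
      then have "q (l - a) \<noteq> 0" "p l a \<noteq> 0" by auto
      then show "a \<in> {0..l}" using q_neg p_neg by (metis atLeastAtMost_iff diff_ge_0_iff_ge not_le)
    qed
  qed simp
  also have "{0..l} = insert 0 {1..l}" using l by auto
  finally have r: "r_seq q p l = q l * p l 0 + (\<Sum>z\<in>{1..l}. q (l - z) * p l z)" by simp
  have s: "(\<Sum>z1\<in>{1..l}. pdd p l z1 * q_restr q p (l - z1)) = - (\<Sum>z\<in>{1..l}. q (l - z) * p l z) / p l 0"
  proof -
    have "(\<Sum>z1\<in>{1..l}. pdd p l z1 * q_restr q p (l - z1)) = (\<Sum>z\<in>{1..l}. - (q (l - z) * p l z) / p l 0)"
    proof (rule sum.cong)
      fix z assume z: "z \<in> {1..l}"
      show "pdd p l z * q_restr q p (l - z) = - (q (l - z) * p l z) / p l 0"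
      proof (cases "l - z \<in> LL p")
        case True
        then show ?thesis using z True \<open>l \<in> LL p\<close> by (simp add: pdd_def q_restr_def)
      next
        case False
        then have "l - z < 0" using LL_down[OF \<open>l \<in> LL p\<close>, of "l - z"] z by fastforce
        then show ?thesis using False q_neg by (simp add: q_restr_def)
      qed
    qed simp
    also have "\<dots> = - (\<Sum>z\<in>{1..l}. q (l - z) * p l z) / p l 0"
      by (simp add: sum_divide_distrib[symmetric] sum_negf)
    finally show ?thesis .
  qed
  show ?thesis using p0 True unfolding s by (simp add: q_restr_def rdd_def r field_simps)
qed

lemma main_eq:
  assumes q_neg: "\<And>l. l < 0 \<Longrightarrow> q l = 0"
    and p_neg: "\<And>l z. z < 0 \<Longrightarrow> p l z = 0"
  shows "q_restr q p l = ff q p l"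
proof (induction "nat l" arbitrary: l rule: less_induct)
  case less
  show ?case
  proof (cases "0 \<le> l")
    case False
    then have "l \<notin> LL p" using LL_nonneg by auto
    moreover have "ff q p l = 0" using ff_fin[of l "{}"] False by simp
    ultimately show ?thesis by (simp add: q_restr_def)
  next
    case True
    have "(\<Sum>z1\<in>{1..l}. pdd p l z1 * q_restr q p (l - z1)) = (\<Sum>z1\<in>{1..l}. pdd p l z1 * ff q p (l - z1))"
    proof (rule sum.cong)
      fix z1 assume "z1 \<in> {1..l}"
      then have "nat (l - z1) < nat l" by auto
      then show "pdd p l z1 * q_restr q p (l - z1) = pdd p l z1 * ff q p (l - z1)" using less by simp
    qed simp
    then show ?thesis using q_rec[OF q_neg p_neg True] ff_rec[OF p_neg True] by simp
  qed
qed

theorem theorem1: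
  fixes q :: "int \<Rightarrow> complex" and p :: "int \<Rightarrow> int \<Rightarrow> complex"
  assumes q_neg: "\<And>l. l < 0 \<Longrightarrow> q l = 0"
    and p_neg: "\<And>l z. z < 0 \<Longrightarrow> p l z = 0"
    and L0_pos: "L0 p \<ge> 1"
  shows "(\<forall>l. q_restr q p l = Sum_any (\<lambda>z. rdd q p (l - z) * beta (pdd p) l z))
    \<and> ((\<forall>l. l \<notin> LL p \<longrightarrow> q l = 0) \<longrightarrow> (\<forall>l. q_restr q p l = q l))"
proof -
  have eq: "q_restr q p l = ff q p l" for l
    by (rule main_eq[where q=q and p=p]) (auto intro: q_neg p_neg)
  show ?thesis
  proof
    show "\<forall>l. q_restr q p l = Sum_any (\<lambda>z. rdd q p (l - z) * beta (pdd p) l z)"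
      using eq unfolding ff_def by blast
    show "(\<forall>l. l \<notin> LL p \<longrightarrow> q l = 0) \<longrightarrow> (\<forall>l. q_restr q p l = q l)"
      by (auto simp: q_restr_def)
  qed
qed

end
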